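(* There are infinitely many positive integers $n$ for which there exists a function $\sigma\colon E(K_{4n})\to\{-1,1\}$ with $\sigma\left(E(K_{4n})\right)=2$ such that $\sigma(M)\neq 0$ for every perfect matching $M$ in $K_{4n}$.
   Context: $K_{4n}$ denotes the complete graph on $4n$ vertices and $E(K_{4n})$ its edge set. For a set $F$ of edges, $\sigma(F)=\sum_{e\in F}\sigma(e)$. *)

theory Defs
  imports Main
begin

definition complete_edges :: "nat \<Rightarrow> nat set set" where
  "complete_edges m = {e. e \<subseteq> {0..<m} \<and> card e = 2}"

definition perfect_matching :: "nat \<Rightarrow> nat set set \<Rightarrow> bool" where
  "perfect_matching m M \<longleftrightarrow> M \<subseteq> complete_edges m \<and>
     (\<forall>v \<in> {0..<m}. \<exists>!e. e \<in> M \<and> v \<in> e)"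

definition sigma_sum :: "(nat set \<Rightarrow> int) \<Rightarrow> nat set set \<Rightarrow> int" where
  "sigma_sum \<sigma> F = (\<Sum>e\<in>F. \<sigma> e)"

end

theory Submission
  imports Defs "HOL-Library.Infinite_Set"
begin

definition sg :: "nat set \<Rightarrow> nat set \<Rightarrow> int" where
  "sg A e = (if card (e \<inter> A) = 1 then -1 else 1)"

lemma finite_complete_edges: "finite (complete_edges m)"
proof -
  have "complete_edges m \<subseteq> Pow {0..<m}" unfolding complete_edges_def by auto
  then show ?thesis by (rule finite_subset) simp
qed

lemma pm_sum:
  assumes pm: "perfect_matching m M" and S: "S \<subseteq> {0..<m}"
  shows "(\<Sum>e\<in>M. card (e \<inter> S)) = card S"
proof -
  have sub: "M \<subseteq> complete_edges m" using pm unfolding perfect_matching_def by blast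
  have fM: "finite M" using sub finite_complete_edges finite_subset by blast
  have fe: "\<forall>e\<in>M. finite (e \<inter> S)" using S finite_subset by blast
  have disj: "\<forall>e\<in>M. \<forall>e'\<in>M. e \<noteq> e' \<longrightarrow> (e \<inter> S) \<inter> (e' \<inter> S) = {}"
  proof (intro ballI impI)
    fix e e' assume e: "e \<in> M" and e': "e' \<in> M" and ne: "e \<noteq> e'"
    show "(e \<inter> S) \<inter> (e' \<inter> S) = {}"
    proof (rule ccontr)
      assume "(e \<inter> S) \<inter> (e' \<inter> S) \<noteq> {}"
      then obtain v where v: "v \<in> e" "v \<in> e'" "v \<in> S" by blast
      then have "v \<in> {0..<m}" using S by blast
      then have "\<exists>!e. e \<in> M \<and> v \<in> e" using pm unfolding perfect_matching_def by blast
      then show False using e e' v ne by blast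
    qed
  qed
  have U: "(\<Union>e\<in>M. e \<inter> S) = S"
  proof
    show "(\<Union>e\<in>M. e \<inter> S) \<subseteq> S" by blast
    show "S \<subseteq> (\<Union>e\<in>M. e \<inter> S)"
    proof
      fix v assume v: "v \<in> S"
      then have "v \<in> {0..<m}" using S by blast
      then have "\<exists>!e. e \<in> M \<and> v \<in> e" using pm unfolding perfect_matching_def by blast
      then show "v \<in> (\<Union>e\<in>M. e \<inter> S)" using v by blast
    qed
  qed
  have "card (\<Union>e\<in>M. e \<inter> S) = (\<Sum>e\<in>M. card (e \<inter> S))"
    by (rule card_UN_disjoint[OF fM fe disj])
  then show ?thesis using U by simp
qed

lemma total_sum:
  assumes am: "a \<le> m"
  shows "sigma_sum (sg {0..<a}) (complete_edges m)
     = 2 * int (a choose 2) + 2 * int ((m - a) choose 2) - int (m choose 2)"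
proof -
  define A where "A = {0..<a}"
  define B where "B = {a..<m}"
  define E where "E = complete_edges m"
  define W where "W = {e. e \<subseteq> A \<and> card e = 2}"
  define X where "X = {e. e \<subseteq> B \<and> card e = 2}"
  have fE: "finite E" unfolding E_def by (rule finite_complete_edges)
  have WX: "W \<union> X \<subseteq> E" unfolding W_def X_def E_def complete_edges_def A_def B_def
    using am by auto
  have dWX: "W \<inter> X = {}"
  proof (rule ccontr)
    assume "W \<inter> X \<noteq> {}"
    then obtain e where "e \<subseteq> A" "e \<subseteq> B" "card e = 2" unfolding W_def X_def by blast
    then have "e \<subseteq> {0..<a} \<inter> {a..<m}" unfolding A_def B_def by blast
    then have "e = {}" by auto
    with \<open>card e = 2\<close> show False by simp
  qed
  have fW: "finite W" and fX: "finite X" using WX fE finite_subset by blast+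
  have cW: "card W = a choose 2" unfolding W_def using n_subsets[of A 2] unfolding A_def by simp
  have cX: "card X = (m - a) choose 2" unfolding X_def using n_subsets[of B 2] unfolding B_def by simp
  have cE: "card E = m choose 2" unfolding E_def complete_edges_def using n_subsets[of "{0..<m}" 2] by simp
  have s1: "(\<Sum>e\<in>W \<union> X. sg A e) = int (card (W \<union> X))"
  proof -
    have "(\<Sum>e\<in>W \<union> X. sg A e) = (\<Sum>e\<in>W \<union> X. 1)"
    proof (rule sum.cong)
      fix e assume "e \<in> W \<union> X"
      then have "card (e \<inter> A) = 2 \<or> card (e \<inter> A) = 0"
      proof
        assume "e \<in> W" then have "e \<inter> A = e" "card e = 2" unfolding W_def by auto
        then show ?thesis by simp
      next
        assume "e \<in> X" then have "e \<inter> A = {}" unfolding X_def A_def B_def by auto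
        then show ?thesis by simp
      qed
      then show "sg A e = 1" unfolding sg_def by auto
    qed simp
    then show ?thesis by simp
  qed
  have s2: "(\<Sum>e\<in>E - (W \<union> X). sg A e) = - int (card (E - (W \<union> X)))"
  proof -
    have "(\<Sum>e\<in>E - (W \<union> X). sg A e) = (\<Sum>e\<in>E - (W \<union> X). -1)"
    proof (rule sum.cong)
      fix e assume e: "e \<in> E - (W \<union> X)"
      then have c2: "card e = 2" and eV: "e \<subseteq> {0..<m}" unfolding E_def complete_edges_def by auto
      have nA: "\<not> e \<subseteq> A" using e c2 unfolding W_def by auto
      have nB: "\<not> e \<subseteq> B" using e c2 unfolding X_def by auto
      have fe: "finite e" using c2 by (metis card.infinite zero_neq_numeral)
      have ne: "e \<inter> A \<noteq> {}" using nB eV unfolding A_def B_def by (force simp: subset_iff)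
      have ps: "e \<inter> A \<subset> e" using nA by blast
      have "card (e \<inter> A) < 2" using psubset_card_mono[OF fe ps] c2 by simp
      moreover have "card (e \<inter> A) > 0" using ne fe by (simp add: card_gt_0_iff)
      ultimately have "card (e \<inter> A) = 1" by simp
      then show "sg A e = -1" unfolding sg_def by simp
    qed simp
    then show ?thesis by simp
  qed
  have "sigma_sum (sg A) E = (\<Sum>e\<in>W \<union> X. sg A e) + (\<Sum>e\<in>E - (W \<union> X). sg A e)"
    unfolding sigma_sum_def using sum.subset_diff[OF WX fE] by (simp add: add.commute)
  also have "\<dots> = int (card W + card X) - int (card E - (card W + card X))"
    using s1 s2 card_Un_disjoint[OF fW fX dWX] card_Diff_subset[OF _ WX] fW fX by simp
  also have "\<dots> = 2 * int (card W) + 2 * int (card X) - int (card E)"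
  proof -
    have "card (W \<union> X) \<le> card E" using card_mono[OF fE WX] .
    then have "card W + card X \<le> card E" using card_Un_disjoint[OF fW fX dWX] by simp
    then show ?thesis by (simp add: of_nat_diff)
  qed
  finally show ?thesis using cW cX cE unfolding A_def E_def by simp
qed

lemma le2: "(c::nat) \<le> 2 \<Longrightarrow> c = 0 \<or> c = 1 \<or> c = 2" by auto

lemma two_choose2: "2 * (x choose 2) = x * (x - 1)"
proof -
  have ev: "even (x * (x - 1))" by (cases "even x") auto
  show ?thesis unfolding choose_two using ev by simp
qed

lemma pm_card_M:
  assumes pm: "perfect_matching m M"
  shows "2 * card M = m"
proof -
  have "(\<Sum>e\<in>M. card (e \<inter> {0..<m})) = m" using pm_sum[OF pm, of "{0..<m}"] by simp
  moreover have "\<forall>e\<in>M. e \<inter> {0..<m} = e \<and> card e = 2"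
    using pm unfolding perfect_matching_def complete_edges_def by auto
  ultimately have "(\<Sum>e\<in>M. (2::nat)) = m" by (metis (no_types, lifting) sum.cong)
  then show ?thesis by simp
qed

lemma pm_nonzero:
  assumes pm: "perfect_matching m M" and am: "a \<le> m" and ao: "odd a" and m4: "4 dvd m"
    and ne: "even (m div 4)"
  shows "sigma_sum (sg {0..<a}) M \<noteq> 0"
proof -
  have sub: "M \<subseteq> complete_edges m" using pm unfolding perfect_matching_def by blast
  have key: "\<forall>e\<in>M. sg {0..<a} e mod 4 = (1 + 2 * int (card (e \<inter> {0..<a}))) mod 4"
  proof
    fix e assume "e \<in> M"
    then have c2: "card e = 2" using sub unfolding complete_edges_def by auto
    then have fe: "finite e" by (metis card.infinite zero_neq_numeral)
    have "card (e \<inter> {0..<a}) \<le> 2" using card_mono[OF fe, of "e \<inter> {0..<a}"] c2 by auto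
    then have "card (e \<inter> {0..<a}) = 0 \<or> card (e \<inter> {0..<a}) = 1 \<or> card (e \<inter> {0..<a}) = 2" by (rule le2)
    then show "sg {0..<a} e mod 4 = (1 + 2 * int (card (e \<inter> {0..<a}))) mod 4"
      unfolding sg_def by (elim disjE) (simp_all only:, simp_all)
  qed
  have "sigma_sum (sg {0..<a}) M mod 4 = (\<Sum>e\<in>M. sg {0..<a} e mod 4) mod 4"
    unfolding sigma_sum_def by (simp add: mod_sum_eq)
  also have "\<dots> = (\<Sum>e\<in>M. (1 + 2 * int (card (e \<inter> {0..<a}))) mod 4) mod 4"
    using key by (metis (no_types, lifting) sum.cong)
  also have "\<dots> = (\<Sum>e\<in>M. (1 + 2 * int (card (e \<inter> {0..<a})))) mod 4"
    by (simp add: mod_sum_eq)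
  also have "(\<Sum>e\<in>M. (1 + 2 * int (card (e \<inter> {0..<a})))) = int (card M) + 2 * int a"
  proof -
    have "(\<Sum>e\<in>M. (1 + 2 * int (card (e \<inter> {0..<a})))) = int (card M) + 2 * int (\<Sum>e\<in>M. card (e \<inter> {0..<a}))"
      by (simp add: sum.distrib sum_distrib_left)
    also have "(\<Sum>e\<in>M. card (e \<inter> {0..<a})) = a" using pm_sum[OF pm, of "{0..<a}"] am by simp
    finally show ?thesis .
  qed
  finally have eq: "sigma_sum (sg {0..<a}) M mod 4 = (int (card M) + 2 * int a) mod 4" .
  obtain q where q: "m = 4 * q" using m4 by blast
  have "even q" using ne q by simp
  then obtain r where r: "q = 2 * r" by blast
  have cM: "card M = 4 * r" using pm_card_M[OF pm] q r by simp
  obtain t where t: "a = 2 * t + 1" using ao oddE by blast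
  have "(int (card M) + 2 * int a) mod 4 = 2" using cM t by (simp add: algebra_simps) presburger
  then show ?thesis using eq by auto
qed

theorem proposition2:
  shows "infinite {n::nat. n > 0 \<and>
    (\<exists>\<sigma> :: nat set \<Rightarrow> int.
       (\<forall>e \<in> complete_edges (4*n). \<sigma> e \<in> {-1, 1}) \<and>
       sigma_sum \<sigma> (complete_edges (4*n)) = 2 \<and>
       (\<forall>M. perfect_matching (4*n) M \<longrightarrow> sigma_sum \<sigma> M \<noteq> 0))}"
  (is "infinite ?S")
proof -
  have mem: "4*j*j+12*j+8 \<in> ?S" for j :: nat
  proof -
    define n where "n = 4*j*j+12*j+8"
    define a where "a = 8*j*j+22*j+13"
    have am: "a \<le> 4*n" unfolding a_def n_def by simp
    have ma: "4*n - a = 8*j*j+26*j+19" unfolding a_def n_def by simp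
    have ao: "odd a" unfolding a_def by simp
    have ne: "even (4*n div 4)" unfolding n_def by simp
    have c1: "2 * (a choose 2) = a * (a - 1)" by (rule two_choose2)
    have c2: "2 * ((4*n - a) choose 2) = (4*n-a) * (4*n-a - 1)" by (rule two_choose2)
    have c3: "2 * ((4*n) choose 2) = 4*n * (4*n - 1)" by (rule two_choose2)
    have "2 * int (a choose 2) + 2 * int ((4*n - a) choose 2) - int ((4*n) choose 2) = 2"
    proof -
      have "int (2 * (a choose 2)) = int (8*j*j+22*j+13) * int (8*j*j+22*j+12)"
        using c1 unfolding a_def by simp
      moreover have "int (2 * ((4*n - a) choose 2)) = int (8*j*j+26*j+19) * int (8*j*j+26*j+18)"
        using c2 unfolding ma by simp
      moreover have "int (2 * ((4*n) choose 2)) = int (16*j*j+48*j+32) * int (16*j*j+48*j+31)"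
        using c3 unfolding n_def by (simp add: algebra_simps)
      ultimately show ?thesis by (simp add: algebra_simps)
    qed
    then have tot: "sigma_sum (sg {0..<a}) (complete_edges (4*n)) = 2"
      using total_sum[OF am] by simp
    have "n > 0" unfolding n_def by simp
    moreover have "\<forall>e \<in> complete_edges (4*n). sg {0..<a} e \<in> {-1, 1}" unfolding sg_def by simp
    moreover have "\<forall>M. perfect_matching (4*n) M \<longrightarrow> sigma_sum (sg {0..<a}) M \<noteq> 0"
      using pm_nonzero[OF _ am ao _ ne] by simp
    ultimately show ?thesis using tot unfolding n_def[symmetric] by blast
  qed
  show ?thesis unfolding infinite_nat_iff_unbounded_le
  proof
    fix m
    show "\<exists>n\<ge>m. n \<in> ?S"
      by (rule exI[of _ "4*m*m+12*m+8"]) (use mem[of m] in simp)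
  qed
qed

end
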